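(* Let $1\le r\le s\le t$ and let $u=ABCd$, $v=A'B'C'd'$ be vertices of $E3C(r,s,t)$ with $A=A'$, $B\ne B'$, $C=C'$ and $d\ne d'$. Then there exist $2r+2$ pairwise internally disjoint $u$–$v$ paths in $E3C(r,s,t)$, each of length at most $s+6$ if $\{d,d'\}=\{0,1\}$ or $\{d,d'\}=\{1,2\}$, and each of length at most $s+8$ if $\{d,d'\}=\{0,2\}$.
   Context: The exchanged 3-ary $n$-cube $E3C(r,s,t)$ ($r,s,t\ge1$, $n=r+s+t+1$): vertices are strings written $x=ABCd$ with $A\in\{0,1,2\}^r$, $B\in\{0,1,2\}^s$, $C\in\{0,1,2\}^t$, $d\in\{0,1,2\}$. Two distinct vertices $x=ABCd$, $y=A'B'C'd'$ are adjacent iff one of: (E0) $A=A',B=B',C=C'$ and $d\ne d'$; (E1) $d=d'=0$, $A=A'$, $B=B'$ and $C,C'$ differ in exactly one position; (E2) $d=d'=1$, $A=A'$, $C=C'$ and $B,B'$ differ in exactly one position; (E3) $d=d'=2$, $B=B'$, $C=C'$ and $A,A'$ differ in exactly one position. Paths are internally disjoint if they share no vertices other than their endpoints; length = number of edges. *)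

theory Defs
  imports Main
begin

type_synonym e3v = "nat list \<times> nat list \<times> nat list \<times> nat"

definition tern :: "nat \<Rightarrow> nat list \<Rightarrow> bool" where
  "tern k X \<longleftrightarrow> length X = k \<and> (\<forall>a\<in>set X. a < 3)"

definition e3c_vert :: "nat \<Rightarrow> nat \<Rightarrow> nat \<Rightarrow> e3v \<Rightarrow> bool" where
  "e3c_vert r s t x = (case x of (A, B, C, d) \<Rightarrow>
      tern r A \<and> tern s B \<and> tern t C \<and> d < 3)"

definition differ_one :: "nat list \<Rightarrow> nat list \<Rightarrow> bool" where
  "differ_one X Y \<longleftrightarrow> length X = length Y \<and> card {i. i < length X \<and> X ! i \<noteq> Y ! i} = 1"

definition e3c_adj :: "nat \<Rightarrow> nat \<Rightarrow> nat \<Rightarrow> e3v \<Rightarrow> e3v \<Rightarrow> bool" where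
  "e3c_adj r s t x y = (e3c_vert r s t x \<and> e3c_vert r s t y \<and> x \<noteq> y \<and>
     (case x of (A, B, C, d) \<Rightarrow> case y of (A', B', C', d') \<Rightarrow>
        (A = A' \<and> B = B' \<and> C = C' \<and> d \<noteq> d')
      \<or> (d = 0 \<and> d' = 0 \<and> A = A' \<and> B = B' \<and> differ_one C C')
      \<or> (d = 1 \<and> d' = 1 \<and> A = A' \<and> C = C' \<and> differ_one B B')
      \<or> (d = 2 \<and> d' = 2 \<and> B = B' \<and> C = C' \<and> differ_one A A')))"

definition e3c_path :: "nat \<Rightarrow> nat \<Rightarrow> nat \<Rightarrow> e3v \<Rightarrow> e3v \<Rightarrow> e3v list \<Rightarrow> bool" where
  "e3c_path r s t u v p \<longleftrightarrow> p \<noteq> [] \<and> hd p = u \<and> last p = v \<and> distinct p \<and>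
     (\<forall>x\<in>set p. e3c_vert r s t x) \<and>
     (\<forall>i. Suc i < length p \<longrightarrow> e3c_adj r s t (p ! i) (p ! Suc i))"

definition path_len :: "'a list \<Rightarrow> nat" where
  "path_len p = length p - 1"

definition internally_disjoint :: "'a \<Rightarrow> 'a \<Rightarrow> 'a list set \<Rightarrow> bool" where
  "internally_disjoint u v P \<longleftrightarrow>
     (\<forall>p\<in>P. \<forall>q\<in>P. p \<noteq> q \<longrightarrow> set p \<inter> set q \<subseteq> {u, v})"

end

theory Submission
  imports Defs
begin

fun hw :: "nat list \<Rightarrow> nat list \<Rightarrow> nat list list" where
  "hw (x#xs) (y#ys) = (if x = y then map (Cons x) (hw xs ys) else (x#xs) # map (Cons y) (hw xs ys))"
| "hw xs ys = [xs]"

fun ham :: "nat list \<Rightarrow> nat list \<Rightarrow> nat" where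
  "ham (x#xs) (y#ys) = (if x = y then 0 else 1) + ham xs ys"
| "ham xs ys = 0"

lemma hw_ne[simp]: "hw X Y \<noteq> []"
  by (induction X Y rule: hw.induct) simp_all

lemma hw_hd[simp]: "hd (hw X Y) = X"
  by (induction X Y rule: hw.induct) (simp_all add: hd_map)

lemma hw_last: "length X = length Y \<Longrightarrow> last (hw X Y) = Y"
  by (induction X Y rule: hw.induct) (auto simp: last_map)

lemma hw_length: "length X = length Y \<Longrightarrow> length (hw X Y) = ham X Y + 1"
  by (induction X Y rule: hw.induct) simp_all

lemma hw_distinct: "distinct (hw X Y)"
  by (induction X Y rule: hw.induct) (auto simp: distinct_map)

lemma ham_le: "ham X Y \<le> length X"
  by (induction X Y rule: ham.induct) auto

lemma ham_sym: "ham X Y = ham Y X"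
  by (induction X Y rule: ham.induct) auto

lemma ham_self[simp]: "ham X X = 0"
  by (induction X) auto

lemma ham0: "length X = length Y \<Longrightarrow> ham X Y = 0 \<Longrightarrow> X = Y"
  by (induction X Y rule: list_induct2) (auto split: if_splits)

lemma hw_set: "Z \<in> set (hw X Y) \<Longrightarrow> length X = length Y \<Longrightarrow> length Z = length X \<and> set Z \<subseteq> set X \<union> set Y"
  by (induction X Y arbitrary: Z rule: hw.induct) (fastforce split: if_splits)+

lemma hw_ham_add: "Z \<in> set (hw X Y) \<Longrightarrow> length X = length Y \<Longrightarrow> ham X Z + ham Z Y = ham X Y"
  by (induction X Y arbitrary: Z rule: hw.induct) (auto split: if_splits)

lemma hw_uniq: "Z1 \<in> set (hw X Y) \<Longrightarrow> Z2 \<in> set (hw X Y) \<Longrightarrow> length X = length Y \<Longrightarrow>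
   ham X Z1 = ham X Z2 \<Longrightarrow> Z1 = Z2"
proof (induction X Y arbitrary: Z1 Z2 rule: hw.induct)
  case (1 x xs y ys)
  show ?case
  proof (cases "x = y")
    case True then show ?thesis using 1 by auto
  next
    case False then show ?thesis using 1 by (auto split: if_splits)
  qed
qed auto

lemma hw_uniq2: "Z1 \<in> set (hw X Y) \<Longrightarrow> Z2 \<in> set (hw X Y) \<Longrightarrow> length X = length Y \<Longrightarrow>
   ham Z1 Y = ham Z2 Y \<Longrightarrow> Z1 = Z2"
  using hw_uniq[of Z1 X Y Z2] hw_ham_add[of Z1 X Y] hw_ham_add[of Z2 X Y] by auto

lemma ham_card: "length X = length Y \<Longrightarrow> card {i. i < length X \<and> X ! i \<noteq> Y ! i} = ham X Y"
proof (induction X Y rule: list_induct2)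
  case Nil then show ?case by simp
next
  case (Cons x xs y ys)
  have e: "{i. i < length (x#xs) \<and> (x#xs) ! i \<noteq> (y#ys) ! i} =
     (if x \<noteq> y then {0} else {}) \<union> Suc ` {i. i < length xs \<and> xs ! i \<noteq> ys ! i}"
  proof (rule set_eqI)
    fix i show "i \<in> {i. i < length (x#xs) \<and> (x#xs) ! i \<noteq> (y#ys) ! i} \<longleftrightarrow>
      i \<in> (if x \<noteq> y then {0} else {}) \<union> Suc ` {i. i < length xs \<and> xs ! i \<noteq> ys ! i}"
      by (cases i) auto
  qed
  show ?case unfolding e using Cons by (simp add: card_image)
qed

lemma differ_one_ham: "differ_one X Y \<longleftrightarrow> length X = length Y \<and> ham X Y = 1"
  unfolding differ_one_def using ham_card by auto

lemma ham_upd: "i < length X \<Longrightarrow> ham X (X[i := v]) = (if X ! i = v then 0 else 1)"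
  by (induction X arbitrary: i) (auto split: nat.splits)

lemma hw_succ: "length X = length Y \<Longrightarrow> successively differ_one (hw X Y)"
proof (induction X Y rule: hw.induct)
  case (1 x xs y ys)
  have l: "length xs = length ys" using 1 by simp
  have a: "successively differ_one (map (Cons z) (hw xs ys))" for z
    using "1.IH" l unfolding successively_map
    by (cases "x = y") (auto elim!: successively_mono simp: differ_one_ham)
  show ?case
  proof (cases "x = y")
    case True then show ?thesis using a by simp
  next
    case False
    have "differ_one (x#xs) (y # hd (hw xs ys))" using False by (simp add: differ_one_ham)
    then show ?thesis using a False
      by (cases "hw xs ys") (auto simp: successively_Cons)
  qed
qed (auto)

definition nb :: "nat list \<Rightarrow> nat \<Rightarrow> nat list" where
  "nb X m = X[m div 2 := (X ! (m div 2) + m mod 2 + 1) mod 3]"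

lemma mod3_aux: "(x::nat) < 3 \<Longrightarrow> (b::nat) < 2 \<Longrightarrow> x \<noteq> (x + b + 1) mod 3"
proof -
  assume "x < 3" "b < 2"
  then have "x = 0 \<or> x = 1 \<or> x = 2" "b = 0 \<or> b = 1" by auto
  then show ?thesis by auto
qed

lemma mod3_aux2: "(x::nat) < 3 \<Longrightarrow> (b::nat) < 2 \<Longrightarrow> b' < 2 \<Longrightarrow>
   (x + b + 1) mod 3 = (x + b' + 1) mod 3 \<Longrightarrow> b = b'"
proof -
  assume "x < 3" "b < 2" "b' < 2" "(x + b + 1) mod 3 = (x + b' + 1) mod 3"
  moreover have "x = 0 \<or> x = 1 \<or> x = 2" "b = 0 \<or> b = 1" "b' = 0 \<or> b' = 1" using calculation by auto
  ultimately show ?thesis by auto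
qed

lemma nb_props:
  assumes "tern k X" "m < 2 * k"
  shows "tern k (nb X m)" "ham X (nb X m) = 1" "ham (nb X m) X = 1" "nb X m \<noteq> X"
    "differ_one X (nb X m)" "differ_one (nb X m) X"
proof -
  have i: "m div 2 < length X" using assms by (auto simp: tern_def)
  have x3: "X ! (m div 2) < 3" using assms i by (auto simp: tern_def)
  have ne: "X ! (m div 2) \<noteq> (X ! (m div 2) + m mod 2 + 1) mod 3"
    using mod3_aux[OF x3, of "m mod 2"] by simp
  show "tern k (nb X m)" using assms i unfolding tern_def nb_def
    using set_update_subset_insert[of X "m div 2" "(X ! (m div 2) + m mod 2 + 1) mod 3"] by fastforce
  show h: "ham X (nb X m) = 1" unfolding nb_def using i ne ham_upd by simp
  then show h2: "ham (nb X m) X = 1" using ham_sym by metis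
  then show "nb X m \<noteq> X" by auto
  show "differ_one X (nb X m)" "differ_one (nb X m) X" using h h2
    by (auto simp: differ_one_ham nb_def)
qed

lemma nb_inj:
  assumes "tern k X" "m < 2 * k" "m' < 2 * k" "nb X m = nb X m'"
  shows "m = m'"
proof -
  have i: "m div 2 < length X" "m' div 2 < length X" using assms by (auto simp: tern_def)
  have lt: "X ! (m div 2) < 3" using i assms by (auto simp: tern_def)
  show ?thesis
  proof (cases "m div 2 = m' div 2")
    case True
    then have "(X ! (m div 2) + m mod 2 + 1) mod 3 = (X ! (m div 2) + m' mod 2 + 1) mod 3"
      using assms(4) i unfolding nb_def by (metis nth_list_update_eq)
    then have "m mod 2 = m' mod 2" using mod3_aux2[OF lt] by simp
    then show ?thesis using True by (metis div_mult_mod_eq)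
  next
    case False
    have "nb X m ! (m div 2) = (X ! (m div 2) + m mod 2 + 1) mod 3"
      using i unfolding nb_def by simp
    then have "nb X m ! (m div 2) \<noteq> X ! (m div 2)"
      using mod3_aux[OF lt, of "m mod 2"] by simp
    moreover have "nb X m' ! (m div 2) = X ! (m div 2)" using False unfolding nb_def by simp
    ultimately show ?thesis using assms(4) by simp
  qed
qed

lemma path_iff: "e3c_path r s t u v p \<longleftrightarrow> p \<noteq> [] \<and> hd p = u \<and> last p = v \<and> distinct p \<and>
     (\<forall>x\<in>set p. e3c_vert r s t x) \<and> successively (e3c_adj r s t) p"
  unfolding e3c_path_def successively_conv_nth by blast

lemma differ_one_sym: "differ_one X Y \<Longrightarrow> differ_one Y X"
  using ham_sym by (auto simp: differ_one_ham)

lemma adj_sym: "e3c_adj r s t x y \<Longrightarrow> e3c_adj r s t y x"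
  unfolding e3c_adj_def by (auto split: prod.splits dest: differ_one_sym)

definition good where
  "good r s t u v L P \<longleftrightarrow> finite P \<and> card P = 2*r+2 \<and> internally_disjoint u v P \<and>
     (\<forall>p\<in>P. e3c_path r s t u v p \<and> path_len p \<le> L)"

lemma good_rev: assumes "good r s t u v L P" shows "good r s t v u L (rev ` P)"
proof -
  have c: "card (rev ` P) = card P" by (rule card_image) (simp add: inj_on_def)
  have id: "internally_disjoint v u (rev ` P)" using assms
    unfolding good_def internally_disjoint_def by auto
  have pp: "e3c_path r s t v u (rev p)" if "e3c_path r s t u v p" for p
  proof -
    have "successively (\<lambda>x y. e3c_adj r s t y x) p"
      using that unfolding path_iff by (auto elim: successively_mono intro: adj_sym)
    then show ?thesis using that unfolding path_iff by (auto simp: hd_rev last_rev)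
  qed
  show ?thesis using assms c id pp unfolding good_def by (auto simp: path_len_def)
qed

lemma family:
  fixes I :: "nat set"
  assumes "finite I"
    and "\<And>i j. i \<in> I \<Longrightarrow> j \<in> I \<Longrightarrow> i < j \<Longrightarrow> set (f i) \<inter> set (f j) \<subseteq> {u, v}"
    and "\<And>i. i \<in> I \<Longrightarrow> \<exists>x\<in>set (f i). x \<notin> {u, v}"
  shows "card (f ` I) = card I" "internally_disjoint u v (f ` I)"
proof -
  have d: "set (f i) \<inter> set (f j) \<subseteq> {u, v}" if "i \<in> I" "j \<in> I" "i \<noteq> j" for i j
  proof (cases "i < j")
    case True then show ?thesis using assms(2) that by blast
  next
    case False then have "j < i" using that by simp
    then show ?thesis using assms(2)[of j i] that by blast
  qed
  have "inj_on f I"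
  proof (rule inj_onI)
    fix i j assume ij: "i \<in> I" "j \<in> I" "f i = f j"
    show "i = j"
    proof (rule ccontr)
      assume "i \<noteq> j"
      then have "set (f i) \<subseteq> {u, v}" using d[OF ij(1,2)] ij(3) by simp
      then show False using assms(3)[OF ij(1)] by blast
    qed
  qed
  then show "card (f ` I) = card I" by (rule card_image)
  show "internally_disjoint u v (f ` I)" unfolding internally_disjoint_def
    using d by blast
qed

definition W :: "nat list \<Rightarrow> nat list \<Rightarrow> nat list \<Rightarrow> nat list \<Rightarrow> e3v list" where
  "W A0 C0 X Y = map (\<lambda>Z. (A0, Z, C0, 1)) (hw X Y)"

lemma W_ne[simp]: "W A0 C0 X Y \<noteq> []" by (simp add: W_def)
lemma W_hd[simp]: "hd (W A0 C0 X Y) = (A0, X, C0, 1)" by (simp add: W_def hd_map)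
lemma W_last[simp]: "length X = length Y \<Longrightarrow> last (W A0 C0 X Y) = (A0, Y, C0, 1)"
  by (simp add: W_def last_map hw_last)
lemma W_distinct[simp]: "distinct (W A0 C0 X Y)"
  by (simp add: W_def distinct_map hw_distinct inj_on_def)
lemma W_mem[simp]: "(a, b, c, d) \<in> set (W A0 C0 X Y) \<longleftrightarrow> a = A0 \<and> c = C0 \<and> d = 1 \<and> b \<in> set (hw X Y)"
  by (auto simp: W_def)
lemma W_length: "length X = length Y \<Longrightarrow> length (W A0 C0 X Y) = ham X Y + 1"
  by (simp add: W_def hw_length)
lemma W_len_le: "tern s X \<Longrightarrow> tern s Y \<Longrightarrow> length (W A0 C0 X Y) \<le> s + 1"
  using W_length[of X Y] ham_le[of X Y] by (auto simp: tern_def)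

lemma hw_tern: "tern s X \<Longrightarrow> tern s Y \<Longrightarrow> Z \<in> set (hw X Y) \<Longrightarrow> tern s Z"
  using hw_set[of Z X Y] unfolding tern_def by auto

lemma W_vert: "tern r A0 \<Longrightarrow> tern t C0 \<Longrightarrow> tern s X \<Longrightarrow> tern s Y \<Longrightarrow>
   x \<in> set (W A0 C0 X Y) \<Longrightarrow> e3c_vert r s t x"
  by (auto simp: W_def e3c_vert_def dest: hw_tern)

lemma W_succ: "tern r A0 \<Longrightarrow> tern t C0 \<Longrightarrow> tern s X \<Longrightarrow> tern s Y \<Longrightarrow>
   successively (e3c_adj r s t) (W A0 C0 X Y)"
proof -
  assume a: "tern r A0" "tern t C0" "tern s X" "tern s Y"
  have "successively differ_one (hw X Y)" using a by (intro hw_succ) (simp add: tern_def)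
  then have "successively (\<lambda>Z Z'. e3c_adj r s t (A0, Z, C0, 1) (A0, Z', C0, 1)) (hw X Y)"
  proof (rule successively_mono)
    fix Z Z' assume "Z \<in> set (hw X Y)" "Z' \<in> set (hw X Y)" "differ_one Z Z'"
    moreover then have "Z \<noteq> Z'" by (auto simp: differ_one_ham)
    ultimately show "e3c_adj r s t (A0, Z, C0, 1) (A0, Z', C0, 1)"
      using a by (auto simp: e3c_adj_def e3c_vert_def dest: hw_tern)
  qed
  then show ?thesis by (simp add: W_def successively_map)
qed

lemma differ_one_ne: "differ_one X Y \<Longrightarrow> X \<noteq> Y"
  by (auto simp: differ_one_ham)

lemma bad_uniq:
  assumes "tern s B" "tern s B'" "m1 < 2*s" "m2 < 2*s"
    "nb B' m1 \<in> set (hw B B')" "nb B' m2 \<in> set (hw B B')"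
  shows "m1 = m2"
proof -
  have l: "length B = length B'" using assms by (simp add: tern_def)
  have "ham (nb B' m1) B' = ham (nb B' m2) B'" using nb_props(3)[OF assms(2)] assms by simp
  then have "nb B' m1 = nb B' m2" using hw_uniq2[OF assms(5,6) l] by simp
  then show ?thesis using nb_inj[OF assms(2,3,4)] by simp
qed

lemma bad_uniq1:
  assumes "tern s B" "tern s B'" "m1 < 2*s" "m2 < 2*s"
    "nb B m1 \<in> set (hw B B')" "nb B m2 \<in> set (hw B B')"
  shows "m1 = m2"
proof -
  have l: "length B = length B'" using assms by (simp add: tern_def)
  have "ham B (nb B m1) = ham B (nb B m2)" using nb_props(2)[OF assms(1)] assms by simp
  then have "nb B m1 = nb B m2" using hw_uniq[OF assms(5,6) l] by simp
  then show ?thesis using nb_inj[OF assms(1,3,4)] by simp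
qed

lemma good_nbrs:
  assumes "tern s B" "tern s B'" "r \<le> s" "1 \<le> r" "Y = B \<or> Y = B'"
  shows "\<exists>g. (\<forall>m < 2*r-1. g m < 2*s \<and> nb Y (g m) \<notin> set (hw B B')) \<and>
             (\<forall>m < 2*r-1. \<forall>m' < 2*r-1. g m = g m' \<longrightarrow> m = m')"
proof -
  define bad where "bad m \<longleftrightarrow> m < 2*s \<and> nb Y m \<in> set (hw B B')" for m
  have u: "bad m1 \<Longrightarrow> bad m2 \<Longrightarrow> m1 = m2" for m1 m2
    using assms(5) bad_uniq[OF assms(1,2)] bad_uniq1[OF assms(1,2)] unfolding bad_def by blast
  define b where "b = (if \<exists>m. bad m then (SOME m. bad m) else 2*s)"
  have nb: "m < 2*s \<Longrightarrow> m \<noteq> b \<Longrightarrow> \<not> bad m" for m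
  proof
    assume "m < 2*s" "m \<noteq> b" "bad m"
    then have "bad b" unfolding b_def by (auto intro: someI)
    then show False using u \<open>bad m\<close> \<open>m \<noteq> b\<close> by blast
  qed
  define g where "g m = (if m < b then m else Suc m)" for m
  have "\<forall>m < 2*r-1. g m < 2*s \<and> nb Y (g m) \<notin> set (hw B B')"
  proof (intro allI impI)
    fix m assume "m < 2*r-1"
    then have "g m < 2*s" "g m \<noteq> b" using assms unfolding g_def by auto
    then show "g m < 2*s \<and> nb Y (g m) \<notin> set (hw B B')" using nb unfolding bad_def by blast
  qed
  moreover have "\<forall>m < 2*r-1. \<forall>m' < 2*r-1. g m = g m' \<longrightarrow> m = m'"
    unfolding g_def by auto
  ultimately show ?thesis by blast
qed

lemma core01:
  assumes r1: "1 \<le> r" and rs: "r \<le> s" and st: "s \<le> t"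
    and tA: "tern r A" and tB: "tern s B" and tB': "tern s B'" and tC: "tern t C"
    and BB: "B \<noteq> B'"
  shows "\<exists>P. good r s t (A, B, C, 0) (A, B', C, 1) (s + 6) P"
proof -
  define u where "u = (A, B, C, 0::nat)"
  define v where "v = (A, B', C, 1::nat)"
  obtain g where g1: "\<And>m. m < 2*r-1 \<Longrightarrow> g m < 2*s \<and> nb B' (g m) \<notin> set (hw B B')"
    and g2: "\<And>m m'. m < 2*r-1 \<Longrightarrow> m' < 2*r-1 \<Longrightarrow> g m = g m' \<Longrightarrow> m = m'"
    using good_nbrs[OF tB tB' rs r1, of B'] by blast
  have lB: "length B = length B'" using tB tB' by (simp add: tern_def)
  define Bj where "Bj m = nb B' (g m)" for m
  define Ck where "Ck m = nb C m" for m
  define A0 where "A0 = nb A 0"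
  define Cx where "Cx = nb C (2*r-1)"
  have rt: "2*r-1 < 2*t" using r1 rs st by arith
  have A0: "tern r A0" "differ_one A A0" "differ_one A0 A" "A0 \<noteq> A"
    using nb_props[OF tA, of 0] r1 unfolding A0_def by auto
  have Cx: "tern t Cx" "differ_one C Cx" "differ_one Cx C" "Cx \<noteq> C"
    using nb_props[OF tC, of "2*r-1"] r1 rs st unfolding Cx_def by auto
  have Ck: "tern t (Ck m)" "differ_one C (Ck m)" "differ_one (Ck m) C" "Ck m \<noteq> C"
    if "m < 2*r-1" for m
    using nb_props[OF tC, of m] less_trans[OF that rt] unfolding Ck_def by auto
  have CkCx: "Ck m \<noteq> Cx" if "m < 2*r-1" for m
    using nb_inj[OF tC, of m "2*r-1"] that rt rs st unfolding Ck_def Cx_def by auto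
  have Ckinj: "Ck m \<noteq> Ck m'" if "m < 2*r-1" "m' < 2*r-1" "m \<noteq> m'" for m m'
  proof -
    have "m < 2*t" "m' < 2*t" using that rt by linarith+
    then show ?thesis using nb_inj[OF tC, of m m'] that unfolding Ck_def by auto
  qed
  have Bj: "tern s (Bj m)" "differ_one B' (Bj m)" "differ_one (Bj m) B'" "Bj m \<notin> set (hw B B')"
     "length (Bj m) = length B'"
    if "m < 2*r-1" for m
    using nb_props[OF tB', of "g m"] g1[OF that] tB' unfolding Bj_def by (auto simp: tern_def)
  have Bjinj: "Bj m \<noteq> Bj m'" if "m < 2*r-1" "m' < 2*r-1" "m \<noteq> m'" for m m'
    using nb_inj[OF tB', of "g m" "g m'"] g1 g2 that unfolding Bj_def by metis
  have Bin: "B \<in> set (hw B B')" "B' \<in> set (hw B B')"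
    using hw_hd[of B B'] hw_last[OF lB] hw_ne[of B B'] by (metis hd_in_set, metis last_in_set)
  have BjB: "Bj m \<noteq> B" "Bj m \<noteq> B'" if "m < 2*r-1" for m using Bj[OF that] Bin by auto
  define P1 where "P1 = u # W A C B B'"
  define P2 where "P2 = [u, (A,B,C,2), (A0,B,C,2)] @ W A0 C B B' @ [(A0,B',C,2), (A,B',C,2), v]"
  define P3 where "P3 = [u, (A,B,Cx,0)] @ W A Cx B B' @ [(A,B',Cx,0), (A,B',C,0), v]"
  define P4 where "P4 m = [u, (A,B,Ck m,0)] @ W A (Ck m) B (Bj m) @
        [(A,Bj m,Ck m,0), (A,Bj m,C,0), (A,Bj m,C,1), v]" for m
  define f where "f i = (if i = 0 then P1 else if i = 1 then P2 else if i = 2 then P3 else P4 (i-3))" for i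
  define I where "I = {..<2*r+2}"
  note vs = tA tB tB' tC A0(1) Cx(1)
  have vt: "e3c_vert r s t (A, B, C, d)" "e3c_vert r s t (A, B', C, d)" "e3c_vert r s t (A0, B, C, d)"
    "e3c_vert r s t (A0, B', C, d)" "e3c_vert r s t (A, B, Cx, d)" "e3c_vert r s t (A, B', Cx, d)"
    if "d < 3" for d
    using vs that by (auto simp: e3c_vert_def)
  have p1: "e3c_path r s t u v P1 \<and> path_len P1 \<le> s + 6"
  proof -
    have "successively (e3c_adj r s t) P1"
      unfolding P1_def u_def using W_succ[OF tA tC tB tB'] vt
      by (simp add: successively_Cons e3c_adj_def)
    moreover have "\<forall>x\<in>set P1. e3c_vert r s t x"
      unfolding P1_def u_def using W_vert[OF tA tC tB tB'] vt by auto
    moreover have "distinct P1" unfolding P1_def u_def by simp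
    ultimately show ?thesis unfolding path_iff P1_def path_len_def
      using W_len_le[OF tB tB', of A C] lB by (simp add: u_def v_def)
  qed
  have p2: "e3c_path r s t u v P2 \<and> path_len P2 \<le> s + 6"
  proof -
    have "successively (e3c_adj r s t) P2"
      unfolding P2_def u_def v_def using W_succ[OF A0(1) tC tB tB'] vt lB A0
      by (simp add: successively_Cons successively_append_iff e3c_adj_def)
    moreover have "\<forall>x\<in>set P2. e3c_vert r s t x"
      unfolding P2_def u_def v_def using W_vert[OF A0(1) tC tB tB'] vt by auto
    moreover have "distinct P2" unfolding P2_def u_def v_def using A0 BB by auto
    ultimately show ?thesis unfolding path_iff P2_def path_len_def
      using W_len_le[OF tB tB', of A0 C] lB by (simp add: u_def v_def)
  qed
  have p3: "e3c_path r s t u v P3 \<and> path_len P3 \<le> s + 6"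
  proof -
    have "successively (e3c_adj r s t) P3"
      unfolding P3_def u_def v_def using W_succ[OF tA Cx(1) tB tB'] vt lB Cx
      by (simp add: successively_Cons successively_append_iff e3c_adj_def)
    moreover have "\<forall>x\<in>set P3. e3c_vert r s t x"
      unfolding P3_def u_def v_def using W_vert[OF tA Cx(1) tB tB'] vt by auto
    moreover have "distinct P3" unfolding P3_def u_def v_def using Cx BB by auto
    ultimately show ?thesis unfolding path_iff P3_def path_len_def
      using W_len_le[OF tB tB', of A Cx] lB by (simp add: u_def v_def)
  qed
  have p4: "e3c_path r s t u v (P4 m) \<and> path_len (P4 m) \<le> s + 6" if m: "m < 2*r-1" for m
  proof -
    note W_succ[OF tA Ck(1)[OF m] tB Bj(1)[OF m]] Ck[OF m] Bj[OF m] BjB[OF m]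
    moreover have vt4: "e3c_vert r s t (A, Bj m, C, d)" "e3c_vert r s t (A, Bj m, Ck m, d)"
       "e3c_vert r s t (A, B, Ck m, d)" if "d < 3" for d
      using vs Ck(1)[OF m] Bj(1)[OF m] that by (auto simp: e3c_vert_def)
    ultimately have "successively (e3c_adj r s t) (P4 m)"
      unfolding P4_def u_def v_def using vt lB
      by (simp add: successively_Cons successively_append_iff e3c_adj_def)
    moreover have "\<forall>x\<in>set (P4 m). e3c_vert r s t x"
      unfolding P4_def u_def v_def using W_vert[OF tA Ck(1)[OF m] tB Bj(1)[OF m]] vt vt4 by auto
    moreover have "distinct (P4 m)" unfolding P4_def u_def v_def using Ck[OF m] BjB[OF m] by auto
    ultimately show ?thesis unfolding path_iff P4_def path_len_def
      using W_len_le[OF tB Bj(1)[OF m], of A "Ck m"] lB Bj(5)[OF m] by (simp add: u_def v_def)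
  qed
  note facts = A0(4) Cx(4) BB Bin
  have d12: "set P1 \<inter> set P2 \<subseteq> {u, v}" unfolding P1_def P2_def u_def v_def using facts by auto
  have d13: "set P1 \<inter> set P3 \<subseteq> {u, v}" unfolding P1_def P3_def u_def v_def using facts by auto
  have d23: "set P2 \<inter> set P3 \<subseteq> {u, v}" unfolding P2_def P3_def u_def v_def using facts by auto
  have d14: "set P1 \<inter> set (P4 m) \<subseteq> {u, v}" if m: "m < 2*r-1" for m
    unfolding P1_def P4_def u_def v_def using facts Ck[OF m] Bj[OF m] BjB[OF m] by auto
  have d24: "set P2 \<inter> set (P4 m) \<subseteq> {u, v}" if m: "m < 2*r-1" for m
    unfolding P2_def P4_def u_def v_def using facts Ck[OF m] Bj[OF m] BjB[OF m] by auto
  have d34: "set P3 \<inter> set (P4 m) \<subseteq> {u, v}" if m: "m < 2*r-1" for m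
    unfolding P3_def P4_def u_def v_def using facts Ck[OF m] Bj[OF m] BjB[OF m] CkCx[OF m] by auto
  have d44: "set (P4 m) \<inter> set (P4 m') \<subseteq> {u, v}" if m: "m < 2*r-1" "m' < 2*r-1" "m \<noteq> m'" for m m'
    unfolding P4_def u_def v_def using facts Ck[OF m(1)] Bj[OF m(1)] BjB[OF m(1)]
      Ck[OF m(2)] Bj[OF m(2)] BjB[OF m(2)] Ckinj[OF m] Bjinj[OF m] by auto
  have fi: "f i = P4 (i - 3)" if "i \<ge> 3" for i using that unfolding f_def by auto
  have mI: "i - 3 < 2*r-1" if "i \<in> I" "i \<ge> 3" for i using that unfolding I_def by auto
  have disj: "set (f i) \<inter> set (f j) \<subseteq> {u, v}" if ij: "i \<in> I" "j \<in> I" "i < j" for i j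
  proof -
    have cs: "i = 0 \<or> i = 1 \<or> i = 2 \<or> i \<ge> 3" "j = 1 \<or> j = 2 \<or> j \<ge> 3" using ij(3) by arith+
    consider "i = 0" "j = 1" | "i = 0" "j = 2" | "i = 1" "j = 2" | "i = 0" "j \<ge> 3" | "i = 1" "j \<ge> 3"
      | "i = 2" "j \<ge> 3" | "i \<ge> 3" "j \<ge> 3" using cs ij(3) by fastforce
    then show ?thesis
    proof cases
      case 1 then show ?thesis using d12 unfolding f_def by simp
    next
      case 2 then show ?thesis using d13 unfolding f_def by simp
    next
      case 3 then show ?thesis using d23 unfolding f_def by simp
    next
      case 4 then show ?thesis using d14[OF mI[OF ij(2)]] fi unfolding f_def by simp
    next
      case 5 then show ?thesis using d24[OF mI[OF ij(2)]] fi by (simp add: f_def)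
    next
      case 6 then show ?thesis using d34[OF mI[OF ij(2)]] fi by (simp add: f_def)
    next
      case 7
      have "i - 3 \<noteq> j - 3" using 7 that by simp
      then show ?thesis using d44[OF mI[OF ij(1)] mI[OF ij(2)]] fi 7 by simp
    qed
  qed
  have inner: "\<exists>x\<in>set (f i). x \<notin> {u, v}" if iI: "i \<in> I" for i
  proof -
    have cs: "i = 0 \<or> i = 1 \<or> i = 2 \<or> i \<ge> 3" by arith
    have "(A,B,C,1) \<in> set P1" unfolding P1_def using Bin by simp
    moreover have "(A,B,C,2) \<in> set P2" unfolding P2_def by simp
    moreover have "(A,B,Cx,0) \<in> set P3" unfolding P3_def by simp
    moreover have "(A,B,Ck m,0) \<in> set (P4 m)" for m unfolding P4_def by simp
    moreover have "(A,B,Ck (i-3),0) \<notin> {u,v}" if "i \<ge> 3" using Ck[OF mI[OF iI that]] by (simp add: u_def v_def)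
    moreover have "(A,B,C,1::nat) \<notin> {u,v}" "(A,B,C,2::nat) \<notin> {u,v}" "(A,B,Cx,0::nat) \<notin> {u,v}"
      using Cx BB by (auto simp: u_def v_def)
    ultimately show ?thesis using cs unfolding f_def
      by (cases "i = 0"; cases "i = 1"; cases "i = 2") (simp_all only: if_True if_False simp_thms; blast)+
  qed
  have pf: "e3c_path r s t u v (f i) \<and> path_len (f i) \<le> s + 6" if "i \<in> I" for i
    using p1 p2 p3 p4[OF mI[OF that]] unfolding f_def by auto
  have fin: "finite I" unfolding I_def by simp
  have "good r s t u v (s+6) (f ` I)"
    unfolding good_def using family[OF fin disj inner] pf fin by (auto simp: I_def)
  then show ?thesis unfolding u_def v_def by blast
qed

lemma core12:
  assumes r1: "1 \<le> r" and rs: "r \<le> s" and st: "s \<le> t"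
    and tA: "tern r A" and tB: "tern s B" and tB': "tern s B'" and tC: "tern t C"
    and BB: "B \<noteq> B'"
  shows "\<exists>P. good r s t (A, B, C, 1) (A, B', C, 2) (s + 6) P"
proof -
  define u where "u = (A, B, C, 1::nat)"
  define v where "v = (A, B', C, 2::nat)"
  obtain g where g1: "\<And>m. m < 2*r-1 \<Longrightarrow> g m < 2*s \<and> nb B (g m) \<notin> set (hw B B')"
    and g2: "\<And>m m'. m < 2*r-1 \<Longrightarrow> m' < 2*r-1 \<Longrightarrow> g m = g m' \<Longrightarrow> m = m'"
    using good_nbrs[OF tB tB' rs r1, of B] by blast
  have lB: "length B = length B'" using tB tB' by (simp add: tern_def)
  define Bj where "Bj m = nb B (g m)" for m
  define Ai where "Ai m = nb A m" for m
  define Ax where "Ax = nb A (2*r-1)"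
  define Cx where "Cx = nb C 0"
  have rr: "2*r-1 < 2*r" using r1 by arith
  have Cx: "tern t Cx" "differ_one C Cx" "differ_one Cx C" "Cx \<noteq> C"
    using nb_props[OF tC, of 0] r1 rs st unfolding Cx_def by auto
  have Ax: "tern r Ax" "differ_one A Ax" "differ_one Ax A" "Ax \<noteq> A"
    using nb_props[OF tA, of "2*r-1"] rr unfolding Ax_def by auto
  have Ai: "tern r (Ai m)" "differ_one A (Ai m)" "differ_one (Ai m) A" "Ai m \<noteq> A"
    if "m < 2*r-1" for m
    using nb_props[OF tA, of m] less_trans[OF that rr] unfolding Ai_def by auto
  have AiAx: "Ai m \<noteq> Ax" if "m < 2*r-1" for m
    using nb_inj[OF tA, of m "2*r-1"] that rr unfolding Ai_def Ax_def by auto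
  have Aiinj: "Ai m \<noteq> Ai m'" if "m < 2*r-1" "m' < 2*r-1" "m \<noteq> m'" for m m'
  proof -
    have "m < 2*r" "m' < 2*r" using that rr by linarith+
    then show ?thesis using nb_inj[OF tA, of m m'] that unfolding Ai_def by auto
  qed
  have Bj: "tern s (Bj m)" "differ_one B (Bj m)" "differ_one (Bj m) B" "Bj m \<notin> set (hw B B')"
     "length (Bj m) = length B'"
    if "m < 2*r-1" for m
    using nb_props[OF tB, of "g m"] g1[OF that] tB tB' unfolding Bj_def by (auto simp: tern_def)
  have Bjinj: "Bj m \<noteq> Bj m'" if "m < 2*r-1" "m' < 2*r-1" "m \<noteq> m'" for m m'
    using nb_inj[OF tB, of "g m" "g m'"] g1 g2 that unfolding Bj_def by metis
  have Bin: "B \<in> set (hw B B')" "B' \<in> set (hw B B')"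
    using hw_hd[of B B'] hw_last[OF lB] hw_ne[of B B'] by (metis hd_in_set, metis last_in_set)
  have BjB: "Bj m \<noteq> B" "Bj m \<noteq> B'" if "m < 2*r-1" for m using Bj[OF that] Bin by auto
  define P1 where "P1 = W A C B B' @ [v]"
  define P2 where "P2 = [u, (A,B,C,0), (A,B,Cx,0)] @ W A Cx B B' @ [(A,B',Cx,0), (A,B',C,0), v]"
  define P3 where "P3 = [u, (A,B,C,2), (Ax,B,C,2)] @ W Ax C B B' @ [(Ax,B',C,2), v]"
  define P4 where "P4 m = [u, (A,Bj m,C,1), (A,Bj m,C,2), (Ai m,Bj m,C,2)] @ W (Ai m) C (Bj m) B' @
        [(Ai m,B',C,2), v]" for m
  define f where "f i = (if i = 0 then P1 else if i = 1 then P2 else if i = 2 then P3 else P4 (i-3))" for i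
  define I where "I = {..<2*r+2}"
  note vs = tA tB tB' tC Ax(1) Cx(1)
  have vt: "e3c_vert r s t (A, B, C, d)" "e3c_vert r s t (A, B', C, d)" "e3c_vert r s t (Ax, B, C, d)"
    "e3c_vert r s t (Ax, B', C, d)" "e3c_vert r s t (A, B, Cx, d)" "e3c_vert r s t (A, B', Cx, d)"
    if "d < 3" for d
    using vs that by (auto simp: e3c_vert_def)
  have p1: "e3c_path r s t u v P1 \<and> path_len P1 \<le> s + 6"
  proof -
    have "successively (e3c_adj r s t) P1"
      unfolding P1_def v_def using W_succ[OF tA tC tB tB'] vt lB
      by (simp add: successively_Cons successively_append_iff e3c_adj_def)
    moreover have "\<forall>x\<in>set P1. e3c_vert r s t x"
      unfolding P1_def v_def using W_vert[OF tA tC tB tB'] vt by auto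
    moreover have "distinct P1" unfolding P1_def v_def by simp
    ultimately show ?thesis unfolding path_iff P1_def path_len_def
      using W_len_le[OF tB tB', of A C] lB by (simp add: u_def v_def)
  qed
  have p2: "e3c_path r s t u v P2 \<and> path_len P2 \<le> s + 6"
  proof -
    have "successively (e3c_adj r s t) P2"
      unfolding P2_def u_def v_def using W_succ[OF tA Cx(1) tB tB'] vt lB Cx
      by (simp add: successively_Cons successively_append_iff e3c_adj_def)
    moreover have "\<forall>x\<in>set P2. e3c_vert r s t x"
      unfolding P2_def u_def v_def using W_vert[OF tA Cx(1) tB tB'] vt by auto
    moreover have "distinct P2" unfolding P2_def u_def v_def using Cx BB by auto
    ultimately show ?thesis unfolding path_iff P2_def path_len_def
      using W_len_le[OF tB tB', of A Cx] lB by (simp add: u_def v_def)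
  qed
  have p3: "e3c_path r s t u v P3 \<and> path_len P3 \<le> s + 6"
  proof -
    have "successively (e3c_adj r s t) P3"
      unfolding P3_def u_def v_def using W_succ[OF Ax(1) tC tB tB'] vt lB Ax
      by (simp add: successively_Cons successively_append_iff e3c_adj_def)
    moreover have "\<forall>x\<in>set P3. e3c_vert r s t x"
      unfolding P3_def u_def v_def using W_vert[OF Ax(1) tC tB tB'] vt by auto
    moreover have "distinct P3" unfolding P3_def u_def v_def using Ax BB by auto
    ultimately show ?thesis unfolding path_iff P3_def path_len_def
      using W_len_le[OF tB tB', of Ax C] lB by (simp add: u_def v_def)
  qed
  have p4: "e3c_path r s t u v (P4 m) \<and> path_len (P4 m) \<le> s + 6" if m: "m < 2*r-1" for m
  proof -
    note W_succ[OF Ai(1)[OF m] tC Bj(1)[OF m] tB'] Ai[OF m] Bj[OF m] BjB[OF m]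
    moreover have vt4: "e3c_vert r s t (A, Bj m, C, d)" "e3c_vert r s t (Ai m, Bj m, C, d)"
       "e3c_vert r s t (Ai m, B', C, d)" if "d < 3" for d
      using vs Ai(1)[OF m] Bj(1)[OF m] that by (auto simp: e3c_vert_def)
    ultimately have "successively (e3c_adj r s t) (P4 m)"
      unfolding P4_def u_def v_def using vt lB
      by (simp add: successively_Cons successively_append_iff e3c_adj_def)
    moreover have "\<forall>x\<in>set (P4 m). e3c_vert r s t x"
      unfolding P4_def u_def v_def using W_vert[OF Ai(1)[OF m] tC Bj(1)[OF m] tB'] vt vt4 by auto
    moreover have "distinct (P4 m)" unfolding P4_def u_def v_def using Ai[OF m] BjB[OF m] by auto
    ultimately show ?thesis unfolding path_iff P4_def path_len_def
      using W_len_le[OF Bj(1)[OF m] tB', of "Ai m" C] lB Bj(5)[OF m] by (simp add: u_def v_def)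
  qed
  note facts = Ax(4) Cx(4) BB Bin
  have d12: "set P1 \<inter> set P2 \<subseteq> {u, v}" unfolding P1_def P2_def u_def v_def using facts by auto
  have d13: "set P1 \<inter> set P3 \<subseteq> {u, v}" unfolding P1_def P3_def u_def v_def using facts by auto
  have d23: "set P2 \<inter> set P3 \<subseteq> {u, v}" unfolding P2_def P3_def u_def v_def using facts by auto
  have d14: "set P1 \<inter> set (P4 m) \<subseteq> {u, v}" if m: "m < 2*r-1" for m
    unfolding P1_def P4_def u_def v_def using facts Ai[OF m] Bj[OF m] BjB[OF m] by auto
  have d24: "set P2 \<inter> set (P4 m) \<subseteq> {u, v}" if m: "m < 2*r-1" for m
    unfolding P2_def P4_def u_def v_def using facts Ai[OF m] Bj[OF m] BjB[OF m] by auto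
  have d34: "set P3 \<inter> set (P4 m) \<subseteq> {u, v}" if m: "m < 2*r-1" for m
    unfolding P3_def P4_def u_def v_def using facts Ai[OF m] Bj[OF m] BjB[OF m] AiAx[OF m] by auto
  have d44: "set (P4 m) \<inter> set (P4 m') \<subseteq> {u, v}" if m: "m < 2*r-1" "m' < 2*r-1" "m \<noteq> m'" for m m'
    unfolding P4_def u_def v_def using facts Ai[OF m(1)] Bj[OF m(1)] BjB[OF m(1)]
      Ai[OF m(2)] Bj[OF m(2)] BjB[OF m(2)] Aiinj[OF m] Bjinj[OF m] by auto
  have fi: "f i = P4 (i - 3)" if "i \<ge> 3" for i using that unfolding f_def by auto
  have mI: "i - 3 < 2*r-1" if "i \<in> I" "i \<ge> 3" for i using that unfolding I_def by auto
  have disj: "set (f i) \<inter> set (f j) \<subseteq> {u, v}" if ij: "i \<in> I" "j \<in> I" "i < j" for i j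
  proof -
    have cs: "i = 0 \<or> i = 1 \<or> i = 2 \<or> i \<ge> 3" "j = 1 \<or> j = 2 \<or> j \<ge> 3" using ij(3) by arith+
    consider "i = 0" "j = 1" | "i = 0" "j = 2" | "i = 1" "j = 2" | "i = 0" "j \<ge> 3" | "i = 1" "j \<ge> 3"
      | "i = 2" "j \<ge> 3" | "i \<ge> 3" "j \<ge> 3" using cs ij(3) by fastforce
    then show ?thesis
    proof cases
      case 1 then show ?thesis using d12 unfolding f_def by simp
    next
      case 2 then show ?thesis using d13 unfolding f_def by simp
    next
      case 3 then show ?thesis using d23 unfolding f_def by simp
    next
      case 4 then show ?thesis using d14[OF mI[OF ij(2)]] fi unfolding f_def by simp
    next
      case 5 then show ?thesis using d24[OF mI[OF ij(2)]] fi by (simp add: f_def)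
    next
      case 6 then show ?thesis using d34[OF mI[OF ij(2)]] fi by (simp add: f_def)
    next
      case 7
      have "i - 3 \<noteq> j - 3" using 7 ij by simp
      then show ?thesis using d44[OF mI[OF ij(1)] mI[OF ij(2)]] fi 7 by simp
    qed
  qed
  have inner: "\<exists>x\<in>set (f i). x \<notin> {u, v}" if iI: "i \<in> I" for i
  proof -
    have cs: "i = 0 \<or> i = 1 \<or> i = 2 \<or> i \<ge> 3" by arith
    have "(A,B',C,1) \<in> set P1" unfolding P1_def using Bin by simp
    moreover have "(A,B,C,0) \<in> set P2" unfolding P2_def by simp
    moreover have "(A,B,C,2) \<in> set P3" unfolding P3_def by simp
    moreover have "(A,Bj m,C,1) \<in> set (P4 m)" for m unfolding P4_def by simp
    moreover have "(A,Bj (i-3),C,1) \<notin> {u,v}" if "i \<ge> 3" using BjB[OF mI[OF iI that]] by (simp add: u_def v_def)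
    moreover have "(A,B',C,1::nat) \<notin> {u,v}" "(A,B,C,0::nat) \<notin> {u,v}" "(A,B,C,2::nat) \<notin> {u,v}"
      using BB by (auto simp: u_def v_def)
    ultimately show ?thesis using cs unfolding f_def
      by (cases "i = 0"; cases "i = 1"; cases "i = 2") (simp_all only: if_True if_False simp_thms; blast)+
  qed
  have pf: "e3c_path r s t u v (f i) \<and> path_len (f i) \<le> s + 6" if "i \<in> I" for i
    using p1 p2 p3 p4[OF mI[OF that]] unfolding f_def by auto
  have fin: "finite I" unfolding I_def by simp
  have "good r s t u v (s+6) (f ` I)"
    unfolding good_def using family[OF fin disj inner] pf fin by (auto simp: I_def)
  then show ?thesis unfolding u_def v_def by blast
qed

lemma core02:
  assumes r1: "1 \<le> r" and rs: "r \<le> s" and st: "s \<le> t"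
    and tA: "tern r A" and tB: "tern s B" and tB': "tern s B'" and tC: "tern t C"
    and BB: "B \<noteq> B'"
  shows "\<exists>P. good r s t (A, B, C, 0) (A, B', C, 2) (s + 8) P"
proof -
  define u where "u = (A, B, C, 0::nat)"
  define v where "v = (A, B', C, 2::nat)"
  have lB: "length B = length B'" using tB tB' by (simp add: tern_def)
  define Ai where "Ai m = nb A m" for m
  define Ax where "Ax = nb A (2*r-1)"
  define Ck where "Ck m = nb C m" for m
  define Cx where "Cx = nb C (2*r-1)"
  have rr: "2*r-1 < 2*r" using r1 by arith
  have rt: "2*r-1 < 2*t" using r1 rs st by arith
  have Cx: "tern t Cx" "differ_one C Cx" "differ_one Cx C" "Cx \<noteq> C"
    using nb_props[OF tC, of "2*r-1"] rt unfolding Cx_def by auto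
  have Ck: "tern t (Ck m)" "differ_one C (Ck m)" "differ_one (Ck m) C" "Ck m \<noteq> C"
    if "m < 2*r-1" for m
    using nb_props[OF tC, of m] less_trans[OF that rt] unfolding Ck_def by auto
  have CkCx: "Ck m \<noteq> Cx" if "m < 2*r-1" for m
    using nb_inj[OF tC, of m "2*r-1"] that rt unfolding Ck_def Cx_def by auto
  have Ckinj: "Ck m \<noteq> Ck m'" if "m < 2*r-1" "m' < 2*r-1" "m \<noteq> m'" for m m'
  proof -
    have "m < 2*t" "m' < 2*t" using that rt by linarith+
    then show ?thesis using nb_inj[OF tC, of m m'] that unfolding Ck_def by auto
  qed
  have Ax: "tern r Ax" "differ_one A Ax" "differ_one Ax A" "Ax \<noteq> A"
    using nb_props[OF tA, of "2*r-1"] rr unfolding Ax_def by auto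
  have Ai: "tern r (Ai m)" "differ_one A (Ai m)" "differ_one (Ai m) A" "Ai m \<noteq> A"
    if "m < 2*r-1" for m
    using nb_props[OF tA, of m] less_trans[OF that rr] unfolding Ai_def by auto
  have AiAx: "Ai m \<noteq> Ax" if "m < 2*r-1" for m
    using nb_inj[OF tA, of m "2*r-1"] that rr unfolding Ai_def Ax_def by auto
  have Aiinj: "Ai m \<noteq> Ai m'" if "m < 2*r-1" "m' < 2*r-1" "m \<noteq> m'" for m m'
  proof -
    have "m < 2*r" "m' < 2*r" using that rr by linarith+
    then show ?thesis using nb_inj[OF tA, of m m'] that unfolding Ai_def by auto
  qed
  have Bin: "B \<in> set (hw B B')" "B' \<in> set (hw B B')"
    using hw_hd[of B B'] hw_last[OF lB] hw_ne[of B B'] by (metis hd_in_set, metis last_in_set)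
  define P1 where "P1 = u # W A C B B' @ [v]"
  define P2 where "P2 = [u, (A,B,Cx,0)] @ W A Cx B B' @ [(A,B',Cx,0), (A,B',C,0), v]"
  define P3 where "P3 = [u, (A,B,C,2), (Ax,B,C,2)] @ W Ax C B B' @ [(Ax,B',C,2), v]"
  define P4 where "P4 m = [u, (A,B,Ck m,0)] @ W A (Ck m) B B' @
        [(A,B',Ck m,2), (Ai m,B',Ck m,2), (Ai m,B',Ck m,0), (Ai m,B',C,0), (Ai m,B',C,2), v]" for m
  define f where "f i = (if i = 0 then P1 else if i = 1 then P2 else if i = 2 then P3 else P4 (i-3))" for i
  define I where "I = {..<2*r+2}"
  note vs = tA tB tB' tC Ax(1) Cx(1)
  have vt: "e3c_vert r s t (A, B, C, d)" "e3c_vert r s t (A, B', C, d)" "e3c_vert r s t (Ax, B, C, d)"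
    "e3c_vert r s t (Ax, B', C, d)" "e3c_vert r s t (A, B, Cx, d)" "e3c_vert r s t (A, B', Cx, d)"
    if "d < 3" for d
    using vs that by (auto simp: e3c_vert_def)
  have p1: "e3c_path r s t u v P1 \<and> path_len P1 \<le> s + 8"
  proof -
    have "successively (e3c_adj r s t) P1"
      unfolding P1_def u_def v_def using W_succ[OF tA tC tB tB'] vt lB
      by (simp add: successively_Cons successively_append_iff e3c_adj_def)
    moreover have "\<forall>x\<in>set P1. e3c_vert r s t x"
      unfolding P1_def u_def v_def using W_vert[OF tA tC tB tB'] vt by auto
    moreover have "distinct P1" unfolding P1_def u_def v_def by simp
    ultimately show ?thesis unfolding path_iff P1_def path_len_def
      using W_len_le[OF tB tB', of A C] lB by (simp add: u_def v_def)
  qed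
  have p2: "e3c_path r s t u v P2 \<and> path_len P2 \<le> s + 8"
  proof -
    have "successively (e3c_adj r s t) P2"
      unfolding P2_def u_def v_def using W_succ[OF tA Cx(1) tB tB'] vt lB Cx
      by (simp add: successively_Cons successively_append_iff e3c_adj_def)
    moreover have "\<forall>x\<in>set P2. e3c_vert r s t x"
      unfolding P2_def u_def v_def using W_vert[OF tA Cx(1) tB tB'] vt by auto
    moreover have "distinct P2" unfolding P2_def u_def v_def using Cx BB by auto
    ultimately show ?thesis unfolding path_iff P2_def path_len_def
      using W_len_le[OF tB tB', of A Cx] lB by (simp add: u_def v_def)
  qed
  have p3: "e3c_path r s t u v P3 \<and> path_len P3 \<le> s + 8"
  proof -
    have "successively (e3c_adj r s t) P3"
      unfolding P3_def u_def v_def using W_succ[OF Ax(1) tC tB tB'] vt lB Ax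
      by (simp add: successively_Cons successively_append_iff e3c_adj_def)
    moreover have "\<forall>x\<in>set P3. e3c_vert r s t x"
      unfolding P3_def u_def v_def using W_vert[OF Ax(1) tC tB tB'] vt by auto
    moreover have "distinct P3" unfolding P3_def u_def v_def using Ax BB by auto
    ultimately show ?thesis unfolding path_iff P3_def path_len_def
      using W_len_le[OF tB tB', of Ax C] lB by (simp add: u_def v_def)
  qed
  have p4: "e3c_path r s t u v (P4 m) \<and> path_len (P4 m) \<le> s + 8" if m: "m < 2*r-1" for m
  proof -
    note W_succ[OF tA Ck(1)[OF m] tB tB'] Ai[OF m] Ck[OF m]
    moreover have vt4: "e3c_vert r s t (A, B, Ck m, d)" "e3c_vert r s t (A, B', Ck m, d)"
       "e3c_vert r s t (Ai m, B', Ck m, d)" "e3c_vert r s t (Ai m, B', C, d)" if "d < 3" for d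
      using vs Ai(1)[OF m] Ck(1)[OF m] that by (auto simp: e3c_vert_def)
    ultimately have "successively (e3c_adj r s t) (P4 m)"
      unfolding P4_def u_def v_def using vt lB
      by (simp add: successively_Cons successively_append_iff e3c_adj_def)
    moreover have "\<forall>x\<in>set (P4 m). e3c_vert r s t x"
      unfolding P4_def u_def v_def using W_vert[OF tA Ck(1)[OF m] tB tB'] vt vt4 by auto
    moreover have "distinct (P4 m)" unfolding P4_def u_def v_def using Ai[OF m] Ck[OF m] BB by auto
    ultimately show ?thesis unfolding path_iff P4_def path_len_def
      using W_len_le[OF tB tB', of A "Ck m"] lB by (simp add: u_def v_def)
  qed
  note facts = Ax(4) Cx(4) BB Bin
  have d12: "set P1 \<inter> set P2 \<subseteq> {u, v}" unfolding P1_def P2_def u_def v_def using facts by auto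
  have d13: "set P1 \<inter> set P3 \<subseteq> {u, v}" unfolding P1_def P3_def u_def v_def using facts by auto
  have d23: "set P2 \<inter> set P3 \<subseteq> {u, v}" unfolding P2_def P3_def u_def v_def using facts by auto
  have d14: "set P1 \<inter> set (P4 m) \<subseteq> {u, v}" if m: "m < 2*r-1" for m
    unfolding P1_def P4_def u_def v_def using facts Ai[OF m] Ck[OF m] by auto
  have d24: "set P2 \<inter> set (P4 m) \<subseteq> {u, v}" if m: "m < 2*r-1" for m
    unfolding P2_def P4_def u_def v_def using facts Ai[OF m] Ck[OF m] CkCx[OF m] by auto
  have d34: "set P3 \<inter> set (P4 m) \<subseteq> {u, v}" if m: "m < 2*r-1" for m
    unfolding P3_def P4_def u_def v_def using facts Ai[OF m] Ck[OF m] AiAx[OF m] by auto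
  have d44: "set (P4 m) \<inter> set (P4 m') \<subseteq> {u, v}" if m: "m < 2*r-1" "m' < 2*r-1" "m \<noteq> m'" for m m'
    unfolding P4_def u_def v_def using facts Ai[OF m(1)] Ck[OF m(1)]
      Ai[OF m(2)] Ck[OF m(2)] Aiinj[OF m] Ckinj[OF m] by auto
  have fi: "f i = P4 (i - 3)" if "i \<ge> 3" for i using that unfolding f_def by auto
  have mI: "i - 3 < 2*r-1" if "i \<in> I" "i \<ge> 3" for i using that unfolding I_def by auto
  have disj: "set (f i) \<inter> set (f j) \<subseteq> {u, v}" if ij: "i \<in> I" "j \<in> I" "i < j" for i j
  proof -
    have cs: "i = 0 \<or> i = 1 \<or> i = 2 \<or> i \<ge> 3" "j = 1 \<or> j = 2 \<or> j \<ge> 3" using ij(3) by arith+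
    consider "i = 0" "j = 1" | "i = 0" "j = 2" | "i = 1" "j = 2" | "i = 0" "j \<ge> 3" | "i = 1" "j \<ge> 3"
      | "i = 2" "j \<ge> 3" | "i \<ge> 3" "j \<ge> 3" using cs ij(3) by fastforce
    then show ?thesis
    proof cases
      case 1 then show ?thesis using d12 unfolding f_def by simp
    next
      case 2 then show ?thesis using d13 unfolding f_def by simp
    next
      case 3 then show ?thesis using d23 unfolding f_def by simp
    next
      case 4 then show ?thesis using d14[OF mI[OF ij(2)]] fi unfolding f_def by simp
    next
      case 5 then show ?thesis using d24[OF mI[OF ij(2)]] fi by (simp add: f_def)
    next
      case 6 then show ?thesis using d34[OF mI[OF ij(2)]] fi by (simp add: f_def)
    next
      case 7
      have "i - 3 \<noteq> j - 3" using 7 ij by simp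
      then show ?thesis using d44[OF mI[OF ij(1)] mI[OF ij(2)]] fi 7 by simp
    qed
  qed
  have inner: "\<exists>x\<in>set (f i). x \<notin> {u, v}" if iI: "i \<in> I" for i
  proof -
    have cs: "i = 0 \<or> i = 1 \<or> i = 2 \<or> i \<ge> 3" by arith
    have "(A,B,C,1) \<in> set P1" unfolding P1_def using Bin by simp
    moreover have "(A,B,Cx,0) \<in> set P2" unfolding P2_def by simp
    moreover have "(A,B,C,2) \<in> set P3" unfolding P3_def by simp
    moreover have "(A,B,Ck m,0) \<in> set (P4 m)" for m unfolding P4_def by simp
    moreover have "(A,B,Ck (i-3),0) \<notin> {u,v}" if "i \<ge> 3" using Ck[OF mI[OF iI that]] by (simp add: u_def v_def)
    moreover have "(A,B,C,1::nat) \<notin> {u,v}" "(A,B,Cx,0::nat) \<notin> {u,v}" "(A,B,C,2::nat) \<notin> {u,v}"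
      using BB Cx by (auto simp: u_def v_def)
    ultimately show ?thesis using cs unfolding f_def
      by (cases "i = 0"; cases "i = 1"; cases "i = 2") (simp_all only: if_True if_False simp_thms; blast)+
  qed
  have pf: "e3c_path r s t u v (f i) \<and> path_len (f i) \<le> s + 8" if "i \<in> I" for i
    using p1 p2 p3 p4[OF mI[OF that]] unfolding f_def by auto
  have fin: "finite I" unfolding I_def by simp
  have "good r s t u v (s+8) (f ` I)"
    unfolding good_def using family[OF fin disj inner] pf fin by (auto simp: I_def)
  then show ?thesis unfolding u_def v_def by blast
qed

lemma good_out:
  assumes "good r s t u v L P"
    and "\<And>p. path_len p \<le> L \<Longrightarrow> Q p"
  shows "\<exists>P. finite P \<and> card P = 2 * r + 2 \<and> internally_disjoint u v P \<and>
     (\<forall>p\<in>P. e3c_path r s t u v p \<and> Q p)"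
  using assms unfolding good_def by blast

theorem lemma16:
  fixes r s t :: nat and A B C A' B' C' :: "nat list" and d d' :: nat
  assumes "1 \<le> r" "r \<le> s" "s \<le> t"
    and "e3c_vert r s t (A, B, C, d)" and "e3c_vert r s t (A', B', C', d')"
    and "A = A'" "B \<noteq> B'" "C = C'" "d \<noteq> d'"
  shows "\<exists>P. finite P \<and> card P = 2 * r + 2 \<and>
     internally_disjoint (A, B, C, d) (A', B', C', d') P \<and>
     (\<forall>p\<in>P. e3c_path r s t (A, B, C, d) (A', B', C', d') p \<and>
        (({d, d'} = {0, 1} \<or> {d, d'} = {1, 2}) \<longrightarrow> path_len p \<le> s + 6) \<and>
        ({d, d'} = {0, 2} \<longrightarrow> path_len p \<le> s + 8))"
proof -
  have tA: "tern r A" and tB: "tern s B" and tC: "tern t C" and tB': "tern s B'"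
    and d3: "d < 3" "d' < 3"
    using assms(4,5) by (auto simp: e3c_vert_def)
  note a = assms(1,2,3) tA
  have BB: "B \<noteq> B'" "B' \<noteq> B" using assms(7) by auto
  have cs: "(d = 0 \<and> d' = 1) \<or> (d = 1 \<and> d' = 0) \<or> (d = 1 \<and> d' = 2) \<or> (d = 2 \<and> d' = 1)
     \<or> (d = 0 \<and> d' = 2) \<or> (d = 2 \<and> d' = 0)" using d3 assms(9) by arith
  have ne: "{0::nat, 1} \<noteq> {0, 2}" "{1::nat, 2} \<noteq> {0, 2}" "{0::nat, 2} \<noteq> {0, 1}" "{0::nat, 2} \<noteq> {1, 2}"
    "{1::nat, 0} \<noteq> {0, 2}" "{2::nat, 1} \<noteq> {0, 2}" "{2::nat, 0} \<noteq> {0, 1}" "{2::nat, 0} \<noteq> {1, 2}"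
    by (auto simp: doubleton_eq_iff)
  have e: "{1::nat, 0} = {0, 1}" "{2::nat, 1} = {1, 2}" "{2::nat, 0} = {0, 2}" by auto
  have A': "A' = A" "C' = C" using assms(6,8) by auto
  from cs show ?thesis
  proof (elim disjE conjE)
    assume d: "d = 0" "d' = 1"
    obtain P where P: "good r s t (A,B,C,0) (A,B',C,1) (s+6) P" using core01[OF a tB tB' tC BB(1)] by blast
    show ?thesis unfolding d A' by (rule good_out[OF P]) (use ne in simp)
  next
    assume d: "d = 1" "d' = 0"
    obtain P where P: "good r s t (A,B',C,0) (A,B,C,1) (s+6) P" using core01[OF a tB' tB tC BB(2)] by blast
    show ?thesis unfolding d A' by (rule good_out[OF good_rev[OF P]]) (use ne e in simp)
  next
    assume d: "d = 1" "d' = 2"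
    obtain P where P: "good r s t (A,B,C,1) (A,B',C,2) (s+6) P" using core12[OF a tB tB' tC BB(1)] by blast
    show ?thesis unfolding d A' by (rule good_out[OF P]) (use ne in simp)
  next
    assume d: "d = 2" "d' = 1"
    obtain P where P: "good r s t (A,B',C,1) (A,B,C,2) (s+6) P" using core12[OF a tB' tB tC BB(2)] by blast
    show ?thesis unfolding d A' by (rule good_out[OF good_rev[OF P]]) (use ne e in simp)
  next
    assume d: "d = 0" "d' = 2"
    obtain P where P: "good r s t (A,B,C,0) (A,B',C,2) (s+8) P" using core02[OF a tB tB' tC BB(1)] by blast
    show ?thesis unfolding d A' by (rule good_out[OF P]) (use ne in simp)
  next
    assume d: "d = 2" "d' = 0"
    obtain P where P: "good r s t (A,B',C,0) (A,B,C,2) (s+8) P" using core02[OF a tB' tB tC BB(2)] by blast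
    show ?thesis unfolding d A' by (rule good_out[OF good_rev[OF P]]) (use ne e in simp)
  qed
qed

end
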